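(* Let $\kappa_n>0$, $\gamma>0$ and $\chi_n,\tilde\omega_n\in\mathbb{R}$ satisfy $2\kappa_n\chi_n\le\gamma$ (equivalently, $4\kappa_nS_n-Q_n^2\le 0$ where $S_n=\gamma\chi_n/2$ and $Q_n=-\gamma$ is the value of $-(\gamma+i\Omega-i\tilde\omega_n)$ at $\Omega=\tilde\omega_n$). Then there exists $\epsilon>0$ such that for every real $\Omega$ with $|\tilde\omega_n-\Omega|\le\epsilon$, the solution $F_n$ of $$\frac{\mathrm{d}}{\mathrm{d}t}F_n(t)=\kappa_nF_n(t)^2-(\gamma+i\Omega-i\tilde\omega_n)F_n(t)+\frac{\gamma\chi_n}{2},\qquad F_n(0)=0,$$ converges to a constant as $t\to\infty$; that is, the trajectory of the atom–cavity mean-value dynamics converges to a Markovian behavior even though the environmental frequency $\Omega$ is only known to lie within $\epsilon$ of $\tilde\omega_n$.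
   Context: Setting: an atom level transition with frequency $\tilde\omega_n$ coupled to a non-Markovian environment with memory kernel $\alpha(t,s)=\frac{\gamma}{2}e^{-\gamma|t-s|-i\Omega(t-s)}$, where $\Omega$ is an uncertain environmental central frequency; $\kappa_n$ is the coupling (decay) rate to the environment and $\chi_n$ a real constant. The non-Markovian decay rate enters the linear mean-value equations for $\langle\sigma_n^+\sigma_n^-\rangle,\langle\sigma_n^+a\rangle,\langle\sigma_n^-a^\dagger\rangle,\langle a^\dagger a\rangle$ through the coefficients $\kappa_nF_n(t)$, $\kappa_nF_n^*(t)$; the dynamics is said to converge to Markovian behavior when $F_n(t)$ converges to a constant as $t\to\infty$. *)

theory Defs
  imports "HOL-Analysis.Analysis"
begin

definition riccati_rhs :: "real \<Rightarrow> real \<Rightarrow> real \<Rightarrow> real \<Rightarrow> real \<Rightarrow> complex \<Rightarrow> complex" where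
  "riccati_rhs kappa gamma chi omega Omega z =
     complex_of_real kappa * z\<^sup>2
     - (complex_of_real gamma + \<i> * complex_of_real Omega - \<i> * complex_of_real omega) * z
     + complex_of_real (gamma * chi / 2)"

definition is_F_solution :: "real \<Rightarrow> real \<Rightarrow> real \<Rightarrow> real \<Rightarrow> real \<Rightarrow> (real \<Rightarrow> complex) \<Rightarrow> bool" where
  "is_F_solution kappa gamma chi omega Omega F \<longleftrightarrow>
     F 0 = 0 \<and>
     (\<forall>t\<ge>0. (F has_vector_derivative riccati_rhs kappa gamma chi omega Omega (F t)) (at t within {0..}))"

end

theory Submission
  imports Defs
begin

lemma alg1:
  fixes r0 X zm zp s K :: complex
  assumes d: "1 - r0 * X \<noteq> 0" and s: "s = K * (zp - zm)"
  shows "((0 - ((0 * X + X * - (0 * T + 1 * s) * r0) * zp + 0 * (r0 * X))) * (1 - r0 * X) -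
      (zm - r0 * X * zp) * (0 - (0 * X + X * - (0 * T + 1 * s) * r0))) / ((1 - r0 * X) * (1 - r0 * X))
    = K * ((zm - r0 * X * zp) / (1 - r0 * X) - zm) * ((zm - r0 * X * zp) / (1 - r0 * X) - zp)"
proof -
  have e1: "(zm - r0 * X * zp) / (1 - r0 * X) - zm = r0 * X * (zm - zp) / (1 - r0 * X)"
    using d by (simp add: field_simps)
  have e2: "(zm - r0 * X * zp) / (1 - r0 * X) - zp = (zm - zp) / (1 - r0 * X)"
    using d by (simp add: field_simps)
  show ?thesis unfolding e1 e2 s using d
    by (simp add: divide_simps) algebra
qed

lemma alg2:
  fixes K f zm zp r e s :: complex
  assumes "s = K * (zp - zm)"
  shows "K * (f - zm) * (f - zp) - 0 - (r * e * (K * (f - zm) * (f - zp) - 0) + (r * (- s * e) + 0 * e) * (f - zp))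
     = (K * (f - zm) - s) * (f - zm - r * e * (f - zp))"
  unfolding assms by algebra

lemma exp_decay:
  fixes c :: real assumes c: "c > 0"
  shows "((\<lambda>t. exp (- (c * t))) \<longlongrightarrow> 0) at_top"
proof -
  have f1: "filterlim (\<lambda>t::real. c * t) at_top at_top"
    using filterlim_tendsto_pos_mult_at_top[of "\<lambda>_. c" c at_top "\<lambda>t. t"] c filterlim_ident by auto
  have "filterlim (\<lambda>t::real. - (c * t)) at_bot at_top"
    using f1 filterlim_uminus_at_top by auto
  then show ?thesis using filterlim_compose[OF exp_at_bot] by blast
qed

lemma cexp_decay:
  fixes s :: complex assumes "Re s > 0"
  shows "((\<lambda>t::real. exp (- (s * of_real t))) \<longlongrightarrow> 0) at_top"
proof (rule tendsto_norm_zero_cancel)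
  have "(\<lambda>t::real. norm (exp (- (s * of_real t)))) = (\<lambda>t. exp (- (Re s * t)))"
    by (simp add: norm_exp_eq_Re)
  then show "((\<lambda>t::real. norm (exp (- (s * of_real t)))) \<longlongrightarrow> 0) at_top"
    using exp_decay[OF assms] by simp
qed

lemma lin_zero:
  fixes G b :: "real \<Rightarrow> complex"
  assumes d: "\<And>t. t \<ge> 0 \<Longrightarrow> (G has_vector_derivative b t * G t) (at t within {0..})"
  and cb: "continuous_on {0..} b" and G0: "G 0 = 0" and t0: "t \<ge> 0"
  shows "G t = 0"
proof (cases "t = 0")
  case True then show ?thesis using G0 by simp
next
  case False
  then have tpos: "t > 0" using t0 by auto
  have "compact (b ` {0..t})"
    by (rule compact_continuous_image[OF continuous_on_subset[OF cb]]) auto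
  then obtain M where M: "\<And>x. x \<in> {0..t} \<Longrightarrow> norm (b x) \<le> M"
    using compact_imp_bounded[of "b ` {0..t}"] unfolding bounded_iff by (metis image_eqI)
  define h where "h x = (Re (G x))\<^sup>2 + (Im (G x))\<^sup>2" for x
  define phi where "phi x = exp (-2*M*x) * h x" for x
  define dphi where "dphi x = exp (-2*M*x) * (2 * (Re (G x) * Re (b x * G x) + Im (G x) * Im (b x * G x)))
      - 2*M*exp (-2*M*x) * h x" for x
  have dp: "(phi has_real_derivative dphi x) (at x within {0..})" if "x \<ge> 0" for x
  proof -
    define R where "R = (\<lambda>x. Re (G x))"
    define I where "I = (\<lambda>x. Im (G x))"
    have r: "(R has_real_derivative Re (b x * G x)) (at x within {0..})"
      and i: "(I has_real_derivative Im (b x * G x)) (at x within {0..})"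
      using d[OF that] unfolding has_vector_derivative_complex_iff R_def I_def by auto
    have "((\<lambda>x. exp (-2*M*x) * ((R x)\<^sup>2 + (I x)\<^sup>2)) has_real_derivative dphi x) (at x within {0..})"
      unfolding dphi_def h_def R_def[symmetric] I_def[symmetric]
      by (rule derivative_eq_intros r i refl | simp)+ (simp add: algebra_simps R_def I_def)
    then show ?thesis unfolding phi_def h_def R_def I_def by simp
  qed
  have hG: "h x = (cmod (G x))\<^sup>2" for x
    unfolding h_def cmod_def by simp
  have dneg: "dphi x \<le> 0" if "x \<in> {0..t}" for x
  proof -
    have "Re (G x) * Re (b x * G x) + Im (G x) * Im (b x * G x) = Re (cnj (G x) * (b x * G x))"
      by simp
    also have "\<dots> \<le> cmod (cnj (G x) * (b x * G x))" by (rule complex_Re_le_cmod)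
    also have "\<dots> = norm (b x) * (cmod (G x))\<^sup>2" by (simp add: norm_mult power2_eq_square)
    also have "\<dots> \<le> M * (cmod (G x))\<^sup>2" using M[OF that] by (simp add: mult_right_mono)
    finally have "Re (G x) * Re (b x * G x) + Im (G x) * Im (b x * G x) \<le> M * h x" by (simp add: hG)
    moreover have "dphi x = (2 * exp (-2*M*x)) * ((Re (G x) * Re (b x * G x) + Im (G x) * Im (b x * G x)) - M * h x)"
      unfolding dphi_def by (simp add: algebra_simps)
    ultimately show ?thesis by (simp only:) (rule mult_nonneg_nonpos, simp_all)
  qed
  have cont: "continuous_on {0..t} phi"
    unfolding continuous_on_eq_continuous_within
  proof
    fix x assume x: "x \<in> {0..t}"
    have "continuous (at x within {0..}) phi" using dp[of x] x by (auto intro: DERIV_continuous)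
    then show "continuous (at x within {0..t}) phi" by (rule continuous_within_subset) auto
  qed
  have dat: "DERIV phi x :> dphi x" if "0 < x" for x
  proof -
    have "(phi has_real_derivative dphi x) (at x within {0<..})"
      using DERIV_subset[OF dp[of x], of "{0<..}"] that by (force simp: subset_eq)
    then show ?thesis using at_within_open[of x "{0<..}"] that by auto
  qed
  obtain l z where lz: "0 < z" "z < t" "DERIV phi z :> l" "phi t - phi 0 = (t - 0) * l"
    using MVT[OF tpos cont] dat by (meson real_differentiable_def)
  have "l = dphi z" using DERIV_unique[OF lz(3) dat[OF lz(1)]] .
  then have "l \<le> 0" using dneg[of z] lz by auto
  moreover have "phi 0 = 0" unfolding phi_def h_def using G0 by simp
  ultimately have "phi t \<le> 0" using lz(4) tpos by (simp add: mult_nonneg_nonpos)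
  moreover have "phi t \<ge> 0" unfolding phi_def h_def by simp
  ultimately have "h t = 0" unfolding phi_def by simp
  then show ?thesis unfolding h_def by (simp add: complex_eq_iff add_nonneg_eq_0_iff)
qed

lemma cont_of_deriv:
  fixes F :: "real \<Rightarrow> complex"
  assumes "\<And>t. t \<ge> 0 \<Longrightarrow> (F has_vector_derivative D t) (at t within {0..})"
  shows "continuous_on {0..} F"
  unfolding continuous_on_eq_continuous_within
  by (metis assms atLeast_iff has_vector_derivative_continuous)

lemma nondeg:
  fixes k :: real and zm zp :: complex
  assumes k: "k > 0" and mod: "cmod zm < cmod zp" and re: "Re (zp - zm) > 0"
  shows "\<exists>F. F 0 = 0 \<and> (\<forall>t\<ge>0. (F has_vector_derivative of_real k * (F t - zm) * (F t - zp)) (at t within {0..}))"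
    and "\<And>F. F 0 = 0 \<Longrightarrow> (\<forall>t\<ge>0. (F has_vector_derivative of_real k * (F t - zm) * (F t - zp)) (at t within {0..}))
          \<Longrightarrow> (F \<longlongrightarrow> zm) at_top"
proof -
  define s where "s = of_real k * (zp - zm)"
  have zp0: "zp \<noteq> 0" using mod by auto
  define r0 where "r0 = zm / zp"
  have r0: "cmod r0 < 1" using mod zp0 by (simp add: r0_def norm_divide divide_less_eq)
  have res: "Re s > 0" using k re by (simp add: s_def)
  define E where "E t = exp (- (s * of_real t))" for t :: real
  have nE: "cmod (E t) \<le> 1" if "t \<ge> 0" for t
    unfolding E_def norm_exp_eq_Re using res that by (simp add: mult_nonneg_nonneg)
  have den: "1 - r0 * E t \<noteq> 0" if "t \<ge> 0" for t
  proof
    assume "1 - r0 * E t = 0"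
    then have "cmod (r0 * E t) = 1" by (metis eq_iff_diff_eq_0 norm_one)
    moreover have "cmod (r0 * E t) < 1"
      using r0 nE[OF that] by (simp add: norm_mult) (metis less_le_trans mult_left_le norm_ge_zero less_imp_le mult_less_cancel_left1 linorder_not_le)
    ultimately show False by simp
  qed
  have dE: "(E has_vector_derivative (- s * E t)) (at t within {0..})" for t
    unfolding E_def
    by (rule has_vector_derivative_real_field, (rule derivative_eq_intros refl)+) simp
  define Fx where "Fx t = (zm - r0 * E t * zp) / (1 - r0 * E t)" for t
  show "\<exists>F. F 0 = 0 \<and> (\<forall>t\<ge>0. (F has_vector_derivative of_real k * (F t - zm) * (F t - zp)) (at t within {0..}))"
  proof (intro exI conjI allI impI)
    have "r0 \<noteq> 1" using r0 by auto
    then show "Fx 0 = 0" by (simp add: Fx_def E_def r0_def zp0)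
    fix t :: real assume t: "t \<ge> 0"
    define Fc where "Fc z = (zm - r0 * exp (- (s * z)) * zp) / (1 - r0 * exp (- (s * z)))" for z
    have FF: "Fx = (\<lambda>x. Fc (of_real x))" by (auto simp: Fx_def Fc_def E_def)
    have d0: "1 - r0 * exp (- (s * of_real t)) \<noteq> 0" using den[OF t] by (simp add: E_def)
    have "(Fc has_field_derivative of_real k * (Fc (of_real t) - zm) * (Fc (of_real t) - zp)) (at (of_real t))"
    proof -
      define w where "w = r0 * exp (- (s * of_real t))"
      show ?thesis unfolding Fc_def
        apply (rule derivative_eq_intros refl)+
        using d0 apply simp
        by (rule alg1[OF d0 s_def])
    qed
    then show "(Fx has_vector_derivative of_real k * (Fx t - zm) * (Fx t - zp)) (at t within {0..})"
      unfolding FF by (rule has_vector_derivative_real_field)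
  qed
  show "\<And>F. F 0 = 0 \<Longrightarrow> (\<forall>t\<ge>0. (F has_vector_derivative of_real k * (F t - zm) * (F t - zp)) (at t within {0..}))
          \<Longrightarrow> (F \<longlongrightarrow> zm) at_top"
  proof -
  fix F :: "real \<Rightarrow> complex"
  assume F0: "F 0 = 0" and dF: "\<forall>t\<ge>0. (F has_vector_derivative of_real k * (F t - zm) * (F t - zp)) (at t within {0..})"
  define G where "G t = (F t - zm) - r0 * E t * (F t - zp)" for t
  define b where "b t = of_real k * (F t - zm) - s" for t
  have cF: "continuous_on {0..} F" using dF by (intro cont_of_deriv) auto
  have cb: "continuous_on {0..} b" unfolding b_def by (intro continuous_intros cF)
  have dG: "(G has_vector_derivative b t * G t) (at t within {0..})" if t: "t \<ge> 0" for t
  proof -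
    have dFt: "(F has_vector_derivative of_real k * (F t - zm) * (F t - zp)) (at t within {0..})"
      using dF t by auto
    show ?thesis unfolding G_def[abs_def]
      apply (rule derivative_eq_intros dFt dE refl)+
      unfolding b_def by (rule alg2[OF s_def])
  qed
  have E0: "E 0 = 1" by (simp add: E_def)
  have rz: "r0 * zp = zm" using zp0 by (simp add: r0_def)
  have "G 0 = (0 - zm) - r0 * 1 * (0 - zp)" by (simp only: G_def E0 F0)
  also have "\<dots> = r0 * zp - zm" by (simp add: algebra_simps)
  finally have G00: "G 0 = 0" using rz by simp
  have Gz: "G t = 0" if "t \<ge> 0" for t by (rule lin_zero[OF dG cb G00 that])
  have Feq: "F t = (zm - r0 * E t * zp) / (1 - r0 * E t)" if t: "t \<ge> 0" for t
  proof -
    have g: "(F t - zm) - r0 * E t * (F t - zp) = 0" using Gz[OF t] by (simp only: G_def)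
    have "F t * (1 - r0 * E t) = zm - r0 * E t * zp"
    proof -
      have "F t * (1 - r0 * E t) - (zm - r0 * E t * zp) = (F t - zm) - r0 * E t * (F t - zp)"
        by (simp add: algebra_simps)
      then show ?thesis using g by simp
    qed
    then show ?thesis using den[OF t] by (metis nonzero_mult_div_cancel_right)
  qed
  have limE: "(E \<longlongrightarrow> 0) at_top" unfolding E_def[abs_def] using cexp_decay[OF res] .
  have "((\<lambda>t. (zm - r0 * E t * zp) / (1 - r0 * E t)) \<longlongrightarrow> (zm - r0 * 0 * zp) / (1 - r0 * 0)) at_top"
    by (intro tendsto_divide tendsto_diff tendsto_mult tendsto_const limE) simp
  then have lim1: "((\<lambda>t. (zm - r0 * E t * zp) / (1 - r0 * E t)) \<longlongrightarrow> zm) at_top" by simp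
  have ev1: "\<forall>\<^sub>F t in at_top. (zm - r0 * E t * zp) / (1 - r0 * E t) = F t"
  proof (rule eventually_mono[OF eventually_ge_at_top[of "0::real"]])
    fix t :: real assume "t \<ge> 0"
    then show "(zm - r0 * E t * zp) / (1 - r0 * E t) = F t" by (rule Feq[symmetric])
  qed
  show "(F \<longlongrightarrow> zm) at_top" using Lim_transform_eventually[OF lim1 ev1] by simp
  qed
qed

lemma recip_decay:
  fixes c z0 :: real assumes c: "c > 0"
  shows "((\<lambda>t. z0 / (1 + c * t)) \<longlongrightarrow> 0) at_top"
proof -
  have f1: "filterlim (\<lambda>t::real. c * t) at_top at_top"
    using filterlim_tendsto_pos_mult_at_top[of "\<lambda>_. c" c at_top "\<lambda>t. t"] c filterlim_ident by auto
  have "filterlim (\<lambda>t::real. 1 + c * t) at_top at_top"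
    using filterlim_tendsto_add_at_top[OF tendsto_const f1] .
  then show ?thesis
    using tendsto_divide_0[OF tendsto_const filterlim_at_top_imp_at_infinity] by blast
qed

lemma alg3:
  fixes K Z f l d :: complex
  assumes "d = K * Z"
  shows "K * (f - Z) * (f - Z) * l + (f - Z) * d = K * (f - Z) * ((f - Z) * l + Z)"
  using assms by algebra

lemma alg4:
  fixes K Z d x :: complex
  assumes "d \<noteq> 0"
  shows "0 - (0 * d - Z * (0 + (0 * x + 1 * (K * Z)))) / (d * d) = K * (Z - Z / d - Z) * (Z - Z / d - Z)"
  using assms by (simp add: field_simps)

lemma deg:
  fixes k z0 :: real
  assumes k: "k > 0" and z0: "z0 > 0"
  shows "\<exists>F. F 0 = 0 \<and> (\<forall>t\<ge>0. (F has_vector_derivative (of_real k :: complex) * (F t - of_real z0) * (F t - of_real z0)) (at t within {0..}))"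
    and "\<And>F. F 0 = 0 \<Longrightarrow> (\<forall>t\<ge>0. (F has_vector_derivative (of_real k :: complex) * (F t - of_real z0) * (F t - of_real z0)) (at t within {0..}))
          \<Longrightarrow> (F \<longlongrightarrow> (of_real z0 :: complex)) at_top"
proof -
  define K :: complex where "K = of_real k"
  define Z :: complex where "Z = of_real z0"
  have pos: "1 + k * z0 * t > 0" if "t \<ge> 0" for t using k z0 that by (simp add: add_pos_nonneg)
  have den: "1 + K * Z * of_real t \<noteq> 0" if "t \<ge> 0" for t
  proof -
    have "1 + K * Z * of_real t = of_real (1 + k * z0 * t)" by (simp add: K_def Z_def)
    then show ?thesis using pos[OF that] by (metis of_real_eq_0_iff less_irrefl)
  qed
  define Fx where "Fx t = Z - Z / (1 + K * Z * of_real t)" for t :: real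
  show "\<exists>F. F 0 = 0 \<and> (\<forall>t\<ge>0. (F has_vector_derivative (of_real k :: complex) * (F t - of_real z0) * (F t - of_real z0)) (at t within {0..}))"
  proof (rule exI[of _ Fx], intro conjI allI impI)
    show "Fx 0 = 0" by (simp add: Fx_def)
    fix t :: real assume t: "t \<ge> 0"
    define Fc where "Fc z = Z - Z / (1 + K * Z * z)" for z
    have FF: "Fx = (\<lambda>x. Fc (of_real x))" by (auto simp: Fx_def Fc_def)
    have d0: "1 + K * Z * of_real t \<noteq> 0" using den[OF t] .
    have "(Fc has_field_derivative K * (Fc (of_real t) - Z) * (Fc (of_real t) - Z)) (at (of_real t))"
      unfolding Fc_def
      apply (rule derivative_eq_intros refl)+
      using d0 apply simp
      apply (rule refl)
      by (rule alg4[OF d0])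
    then show "(Fx has_vector_derivative of_real k * (Fx t - of_real z0) * (Fx t - of_real z0)) (at t within {0..})"
      unfolding FF K_def Z_def by (rule has_vector_derivative_real_field)
  qed
  show "\<And>F. F 0 = 0 \<Longrightarrow> (\<forall>t\<ge>0. (F has_vector_derivative (of_real k :: complex) * (F t - of_real z0) * (F t - of_real z0)) (at t within {0..}))
          \<Longrightarrow> (F \<longlongrightarrow> (of_real z0 :: complex)) at_top"
  proof -
    fix F :: "real \<Rightarrow> complex"
    assume F0: "F 0 = 0" and dF: "\<forall>t\<ge>0. (F has_vector_derivative (of_real k :: complex) * (F t - of_real z0) * (F t - of_real z0)) (at t within {0..})"
    define L where "L t = 1 + K * Z * of_real t" for t :: real
    define G where "G t = (F t - Z) * L t + Z" for t
    define b where "b t = K * (F t - Z)" for t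
    have cF: "continuous_on {0..} F" using dF by (intro cont_of_deriv) auto
    have cb: "continuous_on {0..} b" unfolding b_def by (intro continuous_intros cF)
    have dL: "(L has_vector_derivative K * Z) (at t within {0..})" for t
    proof -
      have "((\<lambda>z. 1 + K * Z * z) has_field_derivative K * Z) (at (of_real t))"
        by (rule derivative_eq_intros refl)+ simp
      then show ?thesis unfolding L_def[abs_def] by (rule has_vector_derivative_real_field)
    qed
    have dG: "(G has_vector_derivative b t * G t) (at t within {0..})" if t: "t \<ge> 0" for t
    proof -
      have dFt: "(F has_vector_derivative K * (F t - Z) * (F t - Z)) (at t within {0..})"
        using dF t by (auto simp: K_def Z_def)
      show ?thesis unfolding G_def[abs_def]
        apply (rule derivative_eq_intros dFt dL refl)+
        unfolding b_def G_def by (simp add: algebra_simps)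
    qed
    have L0: "L 0 = 1" by (simp add: L_def)
    have "G 0 = (0 - Z) * 1 + Z" by (simp only: G_def L0 F0)
    then have G00: "G 0 = 0" by simp
    have Gz: "G t = 0" if "t \<ge> 0" for t by (rule lin_zero[OF dG cb G00 that])
    have Feq: "F t = Z - of_real (z0 / (1 + k * z0 * t))" if t: "t \<ge> 0" for t
    proof -
      have g: "(F t - Z) * L t = - Z" using Gz[OF t] unfolding G_def by (simp add: eq_neg_iff_add_eq_0)
      have "F t - Z = - Z / L t" using den[OF t] g unfolding L_def by (metis nonzero_mult_div_cancel_right)
      moreover have "Z / L t = of_real (z0 / (1 + k * z0 * t))" by (simp add: L_def K_def Z_def)
      ultimately show ?thesis by (simp add: algebra_simps)
    qed
    have "((\<lambda>t. of_real (z0 / (1 + k * z0 * t)) :: complex) \<longlongrightarrow> of_real 0) at_top"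
      by (rule tendsto_of_real[OF recip_decay]) (use k z0 in simp)
    then have lim1: "((\<lambda>t. Z - of_real (z0 / (1 + k * z0 * t))) \<longlongrightarrow> Z - 0) at_top"
      by (intro tendsto_diff tendsto_const) simp
    have ev1: "\<forall>\<^sub>F t in at_top. Z - of_real (z0 / (1 + k * z0 * t)) = F t"
    proof (rule eventually_mono[OF eventually_ge_at_top[of "0::real"]])
      fix t :: real assume "t \<ge> 0"
      then show "Z - of_real (z0 / (1 + k * z0 * t)) = F t" by (rule Feq[symmetric])
    qed
    show "(F \<longlongrightarrow> (of_real z0 :: complex)) at_top" using Lim_transform_eventually[OF lim1 ev1] by (simp add: Z_def)
  qed
qed

lemma alg5:
  fixes K a s cc z :: complex
  assumes K: "K \<noteq> 0" and s: "s\<^sup>2 = a\<^sup>2 - 4 * K * cc"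
  shows "K * (z - (a - s) / (2 * K)) * (z - (a + s) / (2 * K)) = K * z\<^sup>2 - a * z + cc"
proof -
  have "K * (z - (a - s) / (2 * K)) * (z - (a + s) / (2 * K)) = K * z\<^sup>2 - a * z + (a\<^sup>2 - s\<^sup>2) / (4 * K)"
    using K by (simp add: field_simps power2_eq_square)
  also have "(a\<^sup>2 - s\<^sup>2) / (4 * K) = cc" using K s by simp
  finally show ?thesis .
qed

lemma per_omega:
  fixes kappa gamma chi omega Omega :: real
  assumes k: "kappa > 0" and g: "gamma > 0" and c: "2 * kappa * chi \<le> gamma"
  shows "(\<exists>F. is_F_solution kappa gamma chi omega Omega F) \<and>
         (\<forall>F. is_F_solution kappa gamma chi omega Omega F \<longrightarrow> (\<exists>L. (F \<longlongrightarrow> L) at_top))"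
proof -
  define K :: complex where "K = of_real kappa"
  define a :: complex where "a = complex_of_real gamma + \<i> * complex_of_real Omega - \<i> * complex_of_real omega"
  define cc :: complex where "cc = complex_of_real (gamma * chi / 2)"
  define dl where "dl = Omega - omega"
  have Ka: "K \<noteq> 0" using k by (simp add: K_def)
  have Rea: "Re a = gamma" and Ima: "Im a = dl" by (simp_all add: a_def dl_def)
  have rhs: "riccati_rhs kappa gamma chi omega Omega z = K * z\<^sup>2 - a * z + cc" for z
    by (simp add: riccati_rhs_def K_def a_def cc_def)
  define D where "D = a\<^sup>2 - 4 * K * cc"
  have ReD: "Re D = gamma\<^sup>2 - dl\<^sup>2 - 2 * kappa * gamma * chi"
    by (simp add: D_def power2_eq_square Rea Ima K_def cc_def)
  have ImD: "Im D = 2 * gamma * dl"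
    by (simp add: D_def power2_eq_square Rea Ima K_def cc_def)
  obtain zm zp where fac: "\<And>z. riccati_rhs kappa gamma chi omega Omega z = K * (z - zm) * (z - zp)"
    and cases: "(cmod zm < cmod zp \<and> Re (zp - zm) > 0) \<or> (\<exists>z0. z0 > 0 \<and> zm = of_real z0 \<and> zp = of_real z0)"
  proof -
    define s where "s = csqrt D"
    have s2: "s\<^sup>2 = D" by (simp add: s_def)
    have sRe: "(Re s)\<^sup>2 - (Im s)\<^sup>2 = Re D" and sIm: "2 * Re s * Im s = Im D"
      using arg_cong[OF s2, of Re] arg_cong[OF s2, of Im] by (simp_all add: power2_eq_square algebra_simps)
    define zm where "zm = (a - s) / (2 * K)"
    define zp where "zp = (a + s) / (2 * K)"
    have fac: "riccati_rhs kappa gamma chi omega Omega z = K * (z - zm) * (z - zp)" for z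
      unfolding rhs zm_def zp_def by (rule alg5[OF Ka, symmetric]) (simp add: s2 D_def)
    show ?thesis
    proof (cases "D = 0")
      case True
      then have "dl = 0" using ImD g by simp
      then have aR: "a = of_real gamma" by (simp add: complex_eq_iff Rea Ima)
      have "s = 0" using True by (simp add: s_def)
      then have "zm = of_real (gamma / (2 * kappa)) \<and> zp = of_real (gamma / (2 * kappa))"
        by (simp add: zm_def zp_def aR K_def)
      moreover have "gamma / (2 * kappa) > 0" using g k by simp
      ultimately show ?thesis using that[OF fac] by blast
    next
      case False
      have Res: "Re s > 0"
      proof (rule ccontr)
        assume "\<not> Re s > 0"
        then have "Re s = 0" using csqrt_principal[of D] by (auto simp: s_def)
        then have "Im D = 0" and RD: "Re D = - (Im s)\<^sup>2" using sIm sRe by auto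
        have "Re D \<le> 0" unfolding RD by simp
        have "dl = 0" using ImD g \<open>Im D = 0\<close> by simp
        then have "Re D = gamma * (gamma - 2 * kappa * chi)" using ReD by (simp add: power2_eq_square algebra_simps)
        moreover have "gamma * (gamma - 2 * kappa * chi) \<ge> 0" using g c by simp
        ultimately have "Re D = 0" using \<open>Re D \<le> 0\<close> by simp
        with \<open>Im D = 0\<close> have "D = 0" by (simp add: complex_eq_iff)
        with False show False by simp
      qed
      have "Re s * (dl * Im s) = gamma * dl\<^sup>2" using sIm ImD by (simp add: power2_eq_square algebra_simps)
      then have "Re s * (dl * Im s) \<ge> 0" using g by simp
      then have dI: "dl * Im s \<ge> 0" using Res by (simp add: zero_le_mult_iff)
      have pos: "gamma * Re s + dl * Im s > 0" using g Res dI by (simp add: add_pos_nonneg)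
      have "(cmod (a - s))\<^sup>2 < (cmod (a + s))\<^sup>2"
        unfolding cmod_power2 using pos by (simp add: Rea Ima power2_eq_square algebra_simps)
      then have m1: "cmod (a - s) < cmod (a + s)" by (simp add: power_less_imp_less_base)
      have "cmod zm < cmod zp" unfolding zm_def zp_def using m1 k
        by (simp add: norm_divide K_def divide_strict_right_mono)
      moreover have "zp - zm = s / K" unfolding zm_def zp_def using Ka by (simp add: field_simps)
      then have "Re (zp - zm) > 0" using Res k by (simp add: K_def)
      ultimately show ?thesis using that[OF fac] by blast
    qed
  qed
  have sol: "is_F_solution kappa gamma chi omega Omega F \<longleftrightarrow>
      F 0 = 0 \<and> (\<forall>t\<ge>0. (F has_vector_derivative of_real kappa * (F t - zm) * (F t - zp)) (at t within {0..}))" for F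
    unfolding is_F_solution_def fac K_def ..
  from cases show ?thesis
  proof
    assume h: "cmod zm < cmod zp \<and> Re (zp - zm) > 0"
    show ?thesis unfolding sol using nondeg[OF k conjunct1[OF h] conjunct2[OF h]] by blast
  next
    assume "\<exists>z0. z0 > 0 \<and> zm = of_real z0 \<and> zp = of_real z0"
    then obtain z0 where z0: "z0 > 0" "zm = of_real z0" "zp = of_real z0" by blast
    show ?thesis unfolding sol z0(2,3) using deg[OF k z0(1)] by blast
  qed
qed

theorem theorem2:
  fixes kappa gamma chi omega :: real
  assumes "kappa > 0" and "gamma > 0" and "2 * kappa * chi \<le> gamma"
  shows "\<exists>eps>0. \<forall>Omega::real. \<bar>omega - Omega\<bar> \<le> eps \<longrightarrow>
           (\<exists>F. is_F_solution kappa gamma chi omega Omega F) \<and>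
           (\<forall>F. is_F_solution kappa gamma chi omega Omega F \<longrightarrow> (\<exists>L. (F \<longlongrightarrow> L) at_top))"
  using per_omega[OF assms] by (intro exI[of _ 1]) auto
end
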